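(* Let $0<\lambda\le1$, $f\in\mathcal U(\lambda)$ and $a_2=f''(0)/2$. Then $$\frac{z}{f(z)}+a_2z\prec 1+2\lambda z+\lambda z^2,\qquad z\in\mathbb D.$$
   Context: $\mathbb D=\{z\in\mathbb C:|z|<1\}$. $\mathcal A$ is the class of functions $f$ analytic in $\mathbb D$ with $f(z)=z+\sum_{k\ge2}a_kz^k$. For $f\in\mathcal A$ with $f(z)\ne0$ for $z\in\mathbb D\setminus\{0\}$, set $U_f(z)=\left(\frac{z}{f(z)}\right)^2f'(z)-1$. For $0<\lambda\le1$, $\mathcal U(\lambda)$ is the class of such $f\in\mathcal A$ with $|U_f(z)|<\lambda$ for all $z\in\mathbb D$. For $g,h$ analytic in $\mathbb D$, $g\prec h$ (subordination) means $g=h\circ\omega$ for some analytic $\omega:\mathbb D\to\mathbb D$ with $\omega(0)=0$. *)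

theory Defs
  imports "HOL-Complex_Analysis.Complex_Analysis"
begin

abbreviation unit_disk :: "complex set" where
  "unit_disk \<equiv> ball 0 1"

definition class_A :: "(complex \<Rightarrow> complex) \<Rightarrow> bool" where
  "class_A f \<longleftrightarrow> f holomorphic_on unit_disk \<and> f 0 = 0 \<and> deriv f 0 = 1"

text \<open>z / f(z), extended by its limit value 1 at the removable singularity z = 0
  (for f in class A, f(z) = z + ..., so z/f(z) tends to 1).\<close>
definition z_over_f :: "(complex \<Rightarrow> complex) \<Rightarrow> complex \<Rightarrow> complex" where
  "z_over_f f z = (if z = 0 then 1 else z / f z)"

definition U_op :: "(complex \<Rightarrow> complex) \<Rightarrow> complex \<Rightarrow> complex" where
  "U_op f z = (z_over_f f z)\<^sup>2 * deriv f z - 1"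

definition class_U :: "real \<Rightarrow> (complex \<Rightarrow> complex) \<Rightarrow> bool" where
  "class_U lam f \<longleftrightarrow> class_A f \<and> (\<forall>z\<in>unit_disk - {0}. f z \<noteq> 0) \<and>
     (\<forall>z\<in>unit_disk. norm (U_op f z) < lam)"

definition subordinate :: "(complex \<Rightarrow> complex) \<Rightarrow> (complex \<Rightarrow> complex) \<Rightarrow> bool" where
  "subordinate g h \<longleftrightarrow> (\<exists>\<omega>. \<omega> holomorphic_on unit_disk \<and> \<omega> ` unit_disk \<subseteq> unit_disk \<and>
      \<omega> 0 = 0 \<and> (\<forall>z\<in>unit_disk. g z = h (\<omega> z)))"

end

theory Submission
  imports Defs
begin

theorem theorem3p1:
  fixes lam :: real and f :: "complex \<Rightarrow> complex"
  assumes "0 < lam" "lam \<le> 1"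
    and "class_U lam f"
  shows "subordinate
           (\<lambda>z. z_over_f f z + ((deriv ^^ 2) f 0 / 2) * z)
           (\<lambda>z. 1 + 2 * complex_of_real lam * z + complex_of_real lam * z\<^sup>2)"
proof -
  let ?D = "ball (0::complex) 1"
  have lam0: "0 < lam" by fact
  have holf: "f holomorphic_on ?D" and f0: "f 0 = 0" and df0: "deriv f 0 = 1"
    and fnz: "\<And>z. z \<in> ?D \<Longrightarrow> z \<noteq> 0 \<Longrightarrow> f z \<noteq> 0"
    and Ub: "\<And>z. z \<in> ?D \<Longrightarrow> norm (U_op f z) < lam"
    using assms(3) unfolding class_U_def class_A_def by auto
  define h where "h = (\<lambda>z. if z = 0 then deriv f 0 else (f z - f 0) / (z - 0))"
  have hol_h: "h holomorphic_on ?D"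
    unfolding h_def by (rule pole_lemma[OF holf]) simp
  have h0: "h 0 = 1" using df0 by (simp add: h_def)
  have hz: "\<And>z. z \<noteq> 0 \<Longrightarrow> h z = f z / z" using f0 by (simp add: h_def)
  have hnz: "\<And>z. z \<in> ?D \<Longrightarrow> h z \<noteq> 0"
    using h0 hz fnz by (metis divide_eq_0_iff zero_neq_one)
  have f_eq: "\<And>z. z \<in> ?D \<Longrightarrow> f z = z * h z"
    using hz f0 by (metis div_by_0 mult_zero_left nonzero_mult_div_cancel_left divide_eq_eq)
  define h1 where "h1 = deriv h"
  have hol_h1: "h1 holomorphic_on ?D" unfolding h1_def by (rule holomorphic_deriv[OF hol_h]) simp
  have dh: "\<And>z. z \<in> ?D \<Longrightarrow> (h has_field_derivative h1 z) (at z)"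
    unfolding h1_def using hol_h by (auto intro: holomorphic_derivI)
  have dh1: "\<And>z. z \<in> ?D \<Longrightarrow> (h1 has_field_derivative deriv h1 z) (at z)"
    using hol_h1 by (auto intro: holomorphic_derivI)
  have df: "\<And>z. z \<in> ?D \<Longrightarrow> (f has_field_derivative (h z + z * h1 z)) (at z)"
  proof -
    fix z assume z: "z \<in> ?D"
    have "((\<lambda>w. w * h w) has_field_derivative (h z + z * h1 z)) (at z)"
      using DERIV_mult[OF DERIV_ident dh[OF z]] by (simp add: algebra_simps)
    then show "(f has_field_derivative (h z + z * h1 z)) (at z)"
      by (rule has_field_derivative_transform_within_open[where S="?D"]) (use z f_eq in auto)
  qed
  have derf: "\<And>z. z \<in> ?D \<Longrightarrow> deriv f z = h z + z * h1 z"
    using df DERIV_imp_deriv by blast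
  have d2: "(deriv ^^ 2) f 0 = 2 * h1 0"
  proof -
    have "((\<lambda>w. h w + w * h1 w) has_field_derivative (2 * h1 0)) (at 0)"
      using dh[of 0] dh1[of 0] by (auto intro!: derivative_eq_intros)
    then have "(deriv f has_field_derivative (2 * h1 0)) (at 0)"
      by (rule has_field_derivative_transform_within_open[where S="?D"]) (use derf in auto)
    then have "deriv (deriv f) 0 = 2 * h1 0" by (simp add: DERIV_imp_deriv)
    then show ?thesis by (simp add: numeral_2_eq_2)
  qed
  define c where "c = h1 0"
  define Q where "Q = (\<lambda>z. 1 / h z + c * z)"
  have hol_Q: "Q holomorphic_on ?D"
    unfolding Q_def using hol_h hnz by (intro holomorphic_intros) auto
  have target: "\<And>z. z \<in> ?D \<Longrightarrow> z_over_f f z + ((deriv ^^ 2) f 0 / 2) * z = Q z"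
    using hz h0 hnz d2 by (auto simp: z_over_f_def Q_def c_def)
  have dQ: "\<And>z. z \<in> ?D \<Longrightarrow> (Q has_field_derivative (- h1 z / (h z)^2 + c)) (at z)"
  proof -
    fix z assume z: "z \<in> ?D"
    have "((\<lambda>w. 1 / h w + c * w) has_field_derivative (- h1 z / (h z)^2 + c)) (at z)"
      using dh[OF z] hnz[OF z] by (auto intro!: derivative_eq_intros simp: power2_eq_square)
    then show "(Q has_field_derivative (- h1 z / (h z)^2 + c)) (at z)"
      by (simp add: Q_def power2_eq_square)
  qed
  have dQ0: "deriv Q 0 = 0"
    using DERIV_imp_deriv[OF dQ[of 0]] h0 by (simp add: c_def)
  have Q0: "Q 0 = 1" using h0 by (simp add: Q_def)
  define G where "G = (\<lambda>z. if z = 0 then deriv Q 0 else (Q z - Q 0) / (z - 0))"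
  have hol_G: "G holomorphic_on ?D"
    unfolding G_def by (rule pole_lemma[OF hol_Q]) simp
  have G0: "G 0 = 0" using dQ0 by (simp add: G_def)
  have QG: "\<And>z. Q z - 1 = z * G z"
    using Q0 G0 by (simp add: G_def)
  have Ueq: "\<And>z. z \<in> ?D \<Longrightarrow> U_op f z = (h z + z * h1 z) / (h z)^2 - 1"
  proof -
    fix z assume z: "z \<in> ?D"
    have "z_over_f f z = 1 / h z"
      using f_eq[OF z] hnz[OF z] h0 by (auto simp: z_over_f_def)
    then show "U_op f z = (h z + z * h1 z) / (h z)^2 - 1"
      using derf[OF z] by (simp add: U_op_def power_divide)
  qed
  have U0: "U_op f 0 = 0" using df0 by (simp add: U_op_def z_over_f_def)
  have key: "\<And>z. z \<in> ?D \<Longrightarrow> z \<noteq> 0 \<Longrightarrow> deriv G z * z^2 = - U_op f z"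
  proof -
    fix z assume z: "z \<in> ?D" and z0: "z \<noteq> 0"
    have "((\<lambda>w. (Q w - 1) / w) has_field_derivative
            (((- h1 z / (h z)^2 + c) * z - (Q z - 1)) / z^2)) (at z)"
      using dQ[OF z] z0 by (auto intro!: derivative_eq_intros simp: power2_eq_square)
    then have "(G has_field_derivative
            (((- h1 z / (h z)^2 + c) * z - (Q z - 1)) / z^2)) (at z)"
      by (rule has_field_derivative_transform_within_open[where S="?D - {0}"])
         (use z z0 Q0 in \<open>auto simp: G_def\<close>)
    then have "deriv G z = ((- h1 z / (h z)^2 + c) * z - (Q z - 1)) / z^2"
      by (rule DERIV_imp_deriv)
    then show "deriv G z * z^2 = - U_op f z"
      unfolding Ueq[OF z] using hnz[OF z] z0
      apply (simp add: Q_def field_simps power2_eq_square)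
      apply (rule mult_left_cancel[of "h z", THEN iffD1])
       apply (simp_all add: algebra_simps)
      done
  qed
  have holU: "U_op f holomorphic_on ?D"
  proof -
    have "(\<lambda>z. (h z + z * h1 z) / (h z)^2 - 1) holomorphic_on ?D"
      using hol_h hol_h1 hnz by (intro holomorphic_intros) auto
    then show ?thesis by (rule holomorphic_transform) (use Ueq in auto)
  qed
  have S1: "\<And>z. z \<in> ?D \<Longrightarrow> norm (U_op f z) \<le> lam * norm z"
  proof -
    fix z assume z: "z \<in> ?D"
    have hol: "(\<lambda>z. U_op f z / of_real lam) holomorphic_on ?D"
      using holU lam0 by (intro holomorphic_intros) auto
    have "norm (U_op f z / of_real lam) \<le> norm z"
    proof (rule Schwarz_Lemma(1)[OF hol])
      show "U_op f 0 / complex_of_real lam = 0" using U0 by simp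
      show "norm (U_op f w / complex_of_real lam) < 1" if "norm w < 1" for w
        using Ub[of w] that lam0 by (simp add: norm_divide)
      show "norm z < 1" using z by simp
    qed
    then show "norm (U_op f z) \<le> lam * norm z"
      using lam0 by (simp add: norm_divide field_simps)
  qed
  have hol_dG: "deriv G holomorphic_on ?D" by (rule holomorphic_deriv[OF hol_G]) simp
  define V where "V = (\<lambda>z. - z * deriv G z / of_real lam)"
  have hol_V: "V holomorphic_on ?D" unfolding V_def using hol_dG hol_G lam0 by (intro holomorphic_intros) auto
  have V0: "V 0 = 0" by (simp add: V_def)
  have Vnorm: "\<And>z. norm (V z) = norm z * norm (deriv G z) / lam"
    using lam0 by (simp add: V_def norm_divide norm_mult)
  have Vle1: "\<And>z. z \<in> ?D \<Longrightarrow> norm (V z) \<le> 1"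
  proof -
    fix z assume z: "z \<in> ?D"
    show "norm (V z) \<le> 1"
    proof (cases "z = 0")
      case True then show ?thesis by (simp add: V0)
    next
      case False
      have "norm (deriv G z) * norm z ^ 2 \<le> lam * norm z"
        using S1[OF z] key[OF z False] by (metis norm_minus_cancel norm_mult norm_power)
      then have "norm z * (norm (deriv G z) * norm z) \<le> norm z * lam"
        by (simp add: power2_eq_square algebra_simps)
      then have "norm (deriv G z) * norm z \<le> lam" using False by simp
      then show ?thesis using lam0 by (simp add: Vnorm field_simps)
    qed
  qed
  have Vle: "\<And>z. z \<in> ?D \<Longrightarrow> norm (V z) \<le> norm z"
  proof -
    fix z assume z: "z \<in> ?D"
    show "norm (V z) \<le> norm z"
    proof (rule field_le_mult_one_interval)
      fix s :: real assume s: "0 < s" "s < 1"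
      have hol: "(\<lambda>w. of_real s * V w) holomorphic_on ?D"
        using hol_V by (intro holomorphic_intros)
      have "norm (of_real s * V z) \<le> norm z"
      proof (rule Schwarz_Lemma(1)[OF hol])
        show "complex_of_real s * V 0 = 0" by (simp add: V0)
        show "norm (complex_of_real s * V w) < 1" if "norm w < 1" for w
        proof -
          have "norm (V w) \<le> 1" using Vle1[of w] that by simp
          then have "s * norm (V w) \<le> s * 1" using s by (intro mult_left_mono) auto
          then have "s * norm (V w) < 1" using s by linarith
          then show ?thesis using s by (simp add: norm_mult)
        qed
        show "norm z < 1" using z by simp
      qed
      then show "s * norm (V z) \<le> norm z" using s by (simp add: norm_mult)
    qed
  qed
  have Gb': "\<And>z. z \<in> ?D \<Longrightarrow> z \<noteq> 0 \<Longrightarrow> norm (deriv G z) \<le> lam"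
  proof -
    fix z assume z: "z \<in> ?D" and z0: "z \<noteq> 0"
    have "norm z * norm (deriv G z) / lam \<le> norm z" using Vle[OF z] by (simp add: Vnorm)
    then have "norm z * norm (deriv G z) \<le> norm z * lam" using lam0 by (simp add: field_simps)
    then show "norm (deriv G z) \<le> lam" using z0 by simp
  qed
  have Gb: "\<And>z. z \<in> ?D \<Longrightarrow> norm (deriv G z) \<le> lam"
  proof -
    fix z assume z: "z \<in> ?D"
    show "norm (deriv G z) \<le> lam"
    proof (cases "z = 0")
      case False then show ?thesis using Gb' z by blast
    next
      case True
      have "continuous_on ?D (deriv G)" using hol_dG by (rule holomorphic_on_imp_continuous_on)
      then have "isCont (deriv G) 0" by (simp add: continuous_on_eq_continuous_at)
      then have lim: "(deriv G \<longlongrightarrow> deriv G 0) (at 0)" by (simp add: isCont_def)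
      have ev: "eventually (\<lambda>x. norm (deriv G x) \<le> lam) (at (0::complex))"
        unfolding eventually_at by (rule exI[of _ 1]) (auto intro: Gb')
      have "norm (deriv G 0) \<le> lam"
        by (rule Lim_norm_ubound[OF _ lim ev]) simp
      then show ?thesis using True by simp
    qed
  qed
  have Gz: "\<And>z. z \<in> ?D \<Longrightarrow> norm (G z) \<le> lam * norm z"
  proof -
    fix z assume z: "z \<in> ?D"
    have "norm (G z - G 0) \<le> lam * norm (z - 0)"
    proof (rule field_differentiable_bound[where S="?D" and f'="deriv G"])
      show "convex ?D" by simp
      show "(G has_field_derivative deriv G w) (at w within ?D)" if "w \<in> ?D" for w
        using hol_G that by (auto intro: holomorphic_derivI)
      show "norm (deriv G w) \<le> lam" if "w \<in> ?D" for w using Gb that by blast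
    qed (use z in auto)
    then show "norm (G z) \<le> lam * norm z" using G0 by simp
  qed
  have Qb: "\<And>z. z \<in> ?D \<Longrightarrow> norm (Q z - 1) < lam"
  proof -
    fix z assume z: "z \<in> ?D"
    have nz: "norm z < 1" using z by simp
    have "norm (Q z - 1) = norm z * norm (G z)" by (simp add: QG norm_mult)
    also have "\<dots> \<le> norm (G z)" using nz by (simp add: mult_left_le_one_le)
    also have "\<dots> \<le> lam * norm z" by (rule Gz[OF z])
    also have "\<dots> < lam" using nz lam0 by simp
    finally show "norm (Q z - 1) < lam" .
  qed
  define \<phi> where "\<phi> = (\<lambda>z. (Q z - 1) / of_real lam)"
  have phib: "\<And>z. z \<in> ?D \<Longrightarrow> norm (\<phi> z) < 1"
    using Qb lam0 by (simp add: \<phi>_def norm_divide)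
  have hol_phi: "(\<lambda>z. 1 + \<phi> z) holomorphic_on ?D"
    unfolding \<phi>_def using hol_Q lam0 by (intro holomorphic_intros) auto
  have img: "(\<lambda>z. 1 + \<phi> z) ` ?D \<subseteq> -\<real>\<^sub>\<le>\<^sub>0"
  proof
    fix w assume "w \<in> (\<lambda>z. 1 + \<phi> z) ` ?D"
    then obtain z where z: "z \<in> ?D" and w: "w = 1 + \<phi> z" by blast
    have "\<bar>Re (\<phi> z)\<bar> < 1" using abs_Re_le_cmod[of "\<phi> z"] phib[OF z] by linarith
    then have "Re w > 0" using w by simp
    then show "w \<in> -\<real>\<^sub>\<le>\<^sub>0" by (auto simp: nonpos_Reals_def)
  qed
  define \<omega> where "\<omega> = (\<lambda>z. csqrt (1 + \<phi> z) - 1)"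
  have hol_om: "\<omega> holomorphic_on ?D"
  proof -
    have "(csqrt \<circ> (\<lambda>z. 1 + \<phi> z)) holomorphic_on ?D"
      by (rule holomorphic_on_compose_gen[OF hol_phi holomorphic_on_csqrt img])
    then have "(\<lambda>z. csqrt (1 + \<phi> z)) holomorphic_on ?D" by (simp add: o_def)
    then show ?thesis unfolding \<omega>_def by (rule holomorphic_on_diff) (rule holomorphic_on_const)
  qed
  have om_b: "\<And>z. z \<in> ?D \<Longrightarrow> norm (\<omega> z) < 1"
  proof -
    fix z assume z: "z \<in> ?D"
    define s where "s = csqrt (1 + \<phi> z)"
    have "(s - 1) * (s + 1) = \<phi> z"
      using power2_csqrt[of "1 + \<phi> z"] by (simp add: s_def algebra_simps power2_eq_square)
    then have e: "norm (s - 1) * norm (s + 1) = norm (\<phi> z)" by (metis norm_mult)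
    have "1 \<le> Re (s + 1)" using Re_csqrt[of "1 + \<phi> z"] by (simp add: s_def)
    also have "\<dots> \<le> norm (s + 1)" by (rule complex_Re_le_cmod)
    finally have "norm (s - 1) \<le> norm (s - 1) * norm (s + 1)"
      by (simp add: mult_le_cancel_left1)
    then show "norm (\<omega> z) < 1" using e phib[OF z] by (simp add: \<omega>_def s_def)
  qed
  have om0: "\<omega> 0 = 0" using Q0 by (simp add: \<omega>_def \<phi>_def)
  have om_eq: "\<And>z. z \<in> ?D \<Longrightarrow> z_over_f f z + ((deriv ^^ 2) f 0 / 2) * z =
        1 + 2 * complex_of_real lam * \<omega> z + complex_of_real lam * (\<omega> z)\<^sup>2"
  proof -
    fix z assume z: "z \<in> ?D"
    have "1 + 2 * complex_of_real lam * \<omega> z + complex_of_real lam * (\<omega> z)\<^sup>2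
        = 1 + complex_of_real lam * ((\<omega> z + 1)^2 - 1)"
      by (simp add: algebra_simps power2_eq_square)
    also have "(\<omega> z + 1)^2 = 1 + \<phi> z" by (simp add: \<omega>_def)
    also have "1 + complex_of_real lam * (1 + \<phi> z - 1) = Q z"
      using lam0 by (simp add: \<phi>_def)
    finally show "z_over_f f z + ((deriv ^^ 2) f 0 / 2) * z =
        1 + 2 * complex_of_real lam * \<omega> z + complex_of_real lam * (\<omega> z)\<^sup>2"
      using target[OF z] by simp
  qed
  show ?thesis
    unfolding subordinate_def
    by (rule exI[of _ \<omega>]) (use hol_om om_b om0 om_eq in auto)
qed

end
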